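(* Let $K>0$ and let $G$ be a probability distribution on $\mathbb{R}$ such that there is a measure $\nu_1$ dominating $G$ with $\frac{dG}{d\nu_1}(x)\le C$ for all $x$, for some $C>0$. Let $x_1,x_2,\ldots$ and $y_1,y_2,\ldots$ be sequences of observations, $\mathbb{D}_{n,m}=\{x_1,\ldots,x_n,y_1,\ldots,y_m\}$, and let $(P_1^*,P_2^* )$ be distributed according to the posterior given $\mathbb{D}_{n,m}$ under a priori independent $DP(K,G)$ priors, with posterior expectation $E_{\mathbb{D}_{n,m}}$. Let $d$ be the Kolmogorov distance, $\mathrm{WIKS}(\mathbb{D}_{n,m})=E_{\mathbb{D}_{n,m}}[d(P_1^*,P_2^* )]$ (uniform weight $W(\varepsilon)=\varepsilon$ on $[0,1]$), and $$Z^{n,m}(\mathbb{D}_{n,m})=\sup_{t\in\mathbb{R}}\Big|\frac{1}{K+n}\sum_{i=1}^n I_{(-\infty,t]}(x_i)-\frac{1}{K+m}\sum_{j=1}^m I_{(-\infty,t]}(y_j)\Big|.$$ Then $$\big|\mathrm{WIKS}(\mathbb{D}_{n,m})-Z^{n,m}(\mathbb{D}_{n,m})\big|\xrightarrow{n,m\to\infty}0.$$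
   Context: $DP(K,G)$ is the Dirichlet process with concentration $K$ and base distribution $G$. Given $(P_1,P_2)$, the $x_i$ are i.i.d. $P_1$ and the $y_j$ i.i.d. $P_2$. The posterior makes $P_1^*,P_2^*$ independent with $P_1^*\sim DP\big(K+n,\frac{KG+\sum_{i\le n}\delta_{x_i}}{K+n}\big)$ and $P_2^*\sim DP\big(K+m,\frac{KG+\sum_{j\le m}\delta_{y_j}}{K+m}\big)$. The Kolmogorov distance is $d(P,Q)=\sup_{t\in\mathbb{R}}|P((-\infty,t])-Q((-\infty,t])|$. The WIKS index with cumulative weight $W$ is $E_{\mathbb{D}_{n,m}}[W(d(P_1^*,P_2^* ))]$. *)

theory Defs
  imports "HOL-Probability.Probability"
begin

definition gamma_measure :: "real \<Rightarrow> real measure" where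
  "gamma_measure a =
     (if a = 0 then return borel 0
      else density lborel (\<lambda>x. ennreal (if 0 < x then x powr (a - 1) * exp (- x) / Gamma a else 0)))"

text \<open>Dirichlet distribution on k coordinates with parameters a 0, ..., a (k-1) (allowed to be 0,
  giving degenerate coordinates), as normalised independent Gamma variables.\<close>
definition dirichlet :: "nat \<Rightarrow> (nat \<Rightarrow> real) \<Rightarrow> (nat \<Rightarrow> real) measure" where
  "dirichlet k a =
     distr (PiM {..<k} (\<lambda>i. gamma_measure (a i))) (PiM {..<k} (\<lambda>_. borel))
       (\<lambda>g. \<lambda>i\<in>{..<k}. g i / (\<Sum>j<k. g j))"

text \<open>Ferguson's definition: P is a random probability measure on the real line (a random
  variable with values in the space of Borel probability measures) distributed as DP(alpha, H):
  for every finite measurable partition A 0, ..., A (k-1) of the real line, the vector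
  (P(A 0), ..., P(A (k-1))) is Dirichlet(alpha H(A 0), ..., alpha H(A (k-1))).\<close>
definition dirichlet_process ::
  "'a measure \<Rightarrow> ('a \<Rightarrow> real measure) \<Rightarrow> real \<Rightarrow> (real set \<Rightarrow> real) \<Rightarrow> bool" where
  "dirichlet_process M P alpha H \<longleftrightarrow>
     P \<in> measurable M (prob_algebra borel) \<and>
     (\<forall>k (A :: nat \<Rightarrow> real set). k \<ge> 1 \<longrightarrow> (\<forall>i<k. A i \<in> sets borel) \<longrightarrow>
        disjoint_family_on A {..<k} \<longrightarrow> (\<Union>i<k. A i) = UNIV \<longrightarrow>
        distr M (PiM {..<k} (\<lambda>_. borel)) (\<lambda>\<omega>. \<lambda>i\<in>{..<k}. measure (P \<omega>) (A i))
          = dirichlet k (\<lambda>i. alpha * H (A i)))"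

definition post_base :: "real \<Rightarrow> real measure \<Rightarrow> (nat \<Rightarrow> real) \<Rightarrow> nat \<Rightarrow> real set \<Rightarrow> real" where
  "post_base K G x n A = (K * measure G A + real (card {i \<in> {..<n}. x i \<in> A})) / (K + real n)"

definition kolmogorov_dist :: "real measure \<Rightarrow> real measure \<Rightarrow> real" where
  "kolmogorov_dist P Q = (SUP t. \<bar>measure P {..t} - measure Q {..t}\<bar>)"

definition Z_stat :: "real \<Rightarrow> (nat \<Rightarrow> real) \<Rightarrow> (nat \<Rightarrow> real) \<Rightarrow> nat \<Rightarrow> nat \<Rightarrow> real" where
  "Z_stat K x y n m =
     (SUP t. \<bar>(\<Sum>i<n. indicator {..t} (x i)) / (K + real n)
              - (\<Sum>j<m. indicator {..t} (y j)) / (K + real m)\<bar>)"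

end

theory Submission
  imports Defs
begin

lemma sets_gamma[measurable_cong]: "sets (gamma_measure a) = sets borel"
  by (simp add: gamma_measure_def)

lemma gamma_nn_moment:
  assumes "a > 0"
  shows "(\<integral>\<^sup>+t. ennreal (t ^ k) \<partial>gamma_measure a) = ennreal (Gamma (a + real k) / Gamma a)"
proof -
  have G: "Gamma a > 0" using assms by (simp add: Gamma_real_pos)
  have "(\<integral>\<^sup>+t. ennreal (t ^ k) \<partial>gamma_measure a) =
     (\<integral>\<^sup>+t. ennreal (if 0 < t then t powr (a - 1) * exp (- t) / Gamma a else 0) * ennreal (t ^ k) \<partial>lborel)"
    using assms unfolding gamma_measure_def by (simp add: nn_integral_density)
  also have "\<dots> = (\<integral>\<^sup>+t. ennreal (indicator {0..} t * t powr (a + real k - 1) / exp t) / ennreal (Gamma a) \<partial>lborel)"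
  proof (intro nn_integral_cong)
    fix t :: real
    show "ennreal (if 0 < t then t powr (a - 1) * exp (- t) / Gamma a else 0) * ennreal (t ^ k) =
         ennreal (indicator {0..} t * t powr (a + real k - 1) / exp t) / ennreal (Gamma a)"
    proof (cases "0 < t")
      case True
      have "t powr (a + real k - 1) = t powr (a - 1) * t ^ k"
        using True by (simp add: powr_add[symmetric] powr_realpow[symmetric] algebra_simps)
      then show ?thesis using True G
        by (simp add: ennreal_mult''[symmetric] divide_ennreal exp_minus field_simps)
    next
      case False
      then show ?thesis by (cases "t = 0") (auto simp: indicator_def)
    qed
  qed
  also have "\<dots> = ennreal (Gamma (a + real k)) / ennreal (Gamma a)"
    using assms by (simp add: nn_integral_divide Gamma_conv_nn_integral_real)
  also have "\<dots> = ennreal (Gamma (a + real k) / Gamma a)"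
    using G assms by (simp add: divide_ennreal Gamma_real_pos add_pos_nonneg less_imp_le)
  finally show ?thesis .
qed

lemma gamma_bochner_moment:
  assumes "a > 0"
  shows "has_bochner_integral (gamma_measure a) (\<lambda>t. t ^ k) (Gamma (a + real k) / Gamma a)"
proof (rule has_bochner_integral_nn_integral)
  show "(\<lambda>t. t ^ k) \<in> borel_measurable (gamma_measure a)" by measurable
  have "AE t in gamma_measure a. 0 \<le> t"
    using assms unfolding gamma_measure_def by (auto simp: AE_density intro!: AE_I2 split: if_splits)
  then show "AE t in gamma_measure a. 0 \<le> t ^ k" by eventually_elim simp
  show "0 \<le> Gamma (a + real k) / Gamma a" using assms by (simp add: Gamma_real_pos less_imp_le add_pos_nonneg)
  show "(\<integral>\<^sup>+t. ennreal (t ^ k) \<partial>gamma_measure a) = ennreal (Gamma (a + real k) / Gamma a)"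
    using assms by (rule gamma_nn_moment)
qed

lemma gamma_facts:
  assumes "a \<ge> 0"
  shows "prob_space (gamma_measure a)" "AE t in gamma_measure a. 0 \<le> t"
    "has_bochner_integral (gamma_measure a) (\<lambda>t. t) a"
    "has_bochner_integral (gamma_measure a) (\<lambda>t. t^2) (a * (a + 1))"
proof -
  have "prob_space (gamma_measure a) \<and> (AE t in gamma_measure a. 0 \<le> t) \<and>
    has_bochner_integral (gamma_measure a) (\<lambda>t. t) a \<and>
    has_bochner_integral (gamma_measure a) (\<lambda>t. t^2) (a * (a + 1))"
  proof (cases "a = 0")
    case True
    have gm: "gamma_measure a = return borel 0" using True by (simp add: gamma_measure_def)
    interpret R: prob_space "return borel (0::real)" by (rule prob_space_return) simp
    have AE0: "AE t in return borel (0::real). t = 0" by (simp add: AE_return)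
    have I1: "integrable (return borel (0::real)) (\<lambda>t. t)"
      by (rule R.integrable_const_bound[where B=0]) (use AE0 in \<open>auto elim!: eventually_mono\<close>)
    have I2: "integrable (return borel (0::real)) (\<lambda>t. t^2)"
      by (rule R.integrable_const_bound[where B=0]) (use AE0 in \<open>auto elim!: eventually_mono\<close>)
    have J1: "integral\<^sup>L (return borel (0::real)) (\<lambda>t. t) = 0"
      by (subst integral_return) auto
    have J2: "integral\<^sup>L (return borel (0::real)) (\<lambda>t. t^2) = 0"
      by (subst integral_return) auto
    have P: "prob_space (return borel (0::real))" by (rule prob_space_return) simp
    have A: "AE t in return borel (0::real). 0 \<le> t" using AE0 by (rule eventually_mono) simp
    show ?thesis unfolding gm using True P A I1 I2 J1 J2
      by (simp add: has_bochner_integral_iff)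
  next
    case False
    then have a: "a > 0" using assms by simp
    have G: "Gamma a > 0" using a by (simp add: Gamma_real_pos)
    have 1: "emeasure (gamma_measure a) (space (gamma_measure a)) = 1"
      using gamma_nn_moment[OF a, of 0] G by (simp add: nn_integral_const)
    have AE: "AE t in gamma_measure a. 0 \<le> t"
      using a unfolding gamma_measure_def by (auto simp: AE_density intro!: AE_I2 split: if_splits)
    have np: "b \<notin> \<int>\<^sub>\<le>\<^sub>0" if "b > 0" for b :: real using that nonpos_Ints_nonpos by force
    have g1: "Gamma (a + 1) = a * Gamma a" by (rule Gamma_plus1) (use np a in auto)
    have g2: "Gamma (a + 2) = (a + 1) * (a * Gamma a)"
      using Gamma_plus1[of "a + 1"] g1 np[of "a+1"] a by (simp add: add.assoc)
    have i1: "has_bochner_integral (gamma_measure a) (\<lambda>t. t) a"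
      using gamma_bochner_moment[OF a, of 1] g1 G by simp
    have i2: "has_bochner_integral (gamma_measure a) (\<lambda>t. t^2) (a * (a + 1))"
    proof -
      have "Gamma (a + real 2) / Gamma a = a * (a + 1)" using g2 G by (simp add: field_simps)
      then show ?thesis using gamma_bochner_moment[OF a, of 2] by simp
    qed
    show ?thesis using 1 AE i1 i2 by (auto intro: prob_spaceI)
  qed
  then show "prob_space (gamma_measure a)" "AE t in gamma_measure a. 0 \<le> t"
    "has_bochner_integral (gamma_measure a) (\<lambda>t. t) a"
    "has_bochner_integral (gamma_measure a) (\<lambda>t. t^2) (a * (a + 1))" by auto
qed

lemma gamma_var:
  assumes "a \<ge> 0"
  shows "has_bochner_integral (gamma_measure a) (\<lambda>t. (t - a)^2) a"
proof -
  interpret P: prob_space "gamma_measure a" using gamma_facts(1)[OF assms] .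
  have h1: "has_bochner_integral (gamma_measure a) (\<lambda>t. t) a" by (rule gamma_facts(3)[OF assms])
  have h2: "has_bochner_integral (gamma_measure a) (\<lambda>t. t^2) (a * (a + 1))" by (rule gamma_facts(4)[OF assms])
  have h0: "has_bochner_integral (gamma_measure a) (\<lambda>t. a^2) (a^2)"
    using P.prob_space by (simp add: has_bochner_integral_iff)
  have "has_bochner_integral (gamma_measure a) (\<lambda>t. t^2 - 2 * a * t + a^2) (a * (a + 1) - 2 * a * a + a^2)"
    by (intro has_bochner_integral_add has_bochner_integral_diff has_bochner_integral_mult_right h0 h1 h2)
  moreover have "a * (a + 1) - 2 * a * a + a^2 = a" by (simp add: algebra_simps power2_eq_square)
  ultimately show ?thesis by (simp add: power2_diff algebra_simps)
qed

lemma ratio_bound: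
  fixes g0 g1 a0 a1 \<alpha> \<epsilon> :: real
  assumes "g0 \<ge> 0" "g1 \<ge> 0" "a0 \<ge> 0" "a1 \<ge> 0" "a0 + a1 = \<alpha>" "\<alpha> > 0" "0 < \<epsilon>" "\<epsilon> \<le> 1/4"
  shows "\<bar>g0 / (g0 + g1) - a0 / \<alpha>\<bar> \<le> ((g0 - a0)^2 + (g1 - a1)^2) / (\<epsilon> * \<alpha>)^2 + 2 * \<epsilon>"
proof -
  have ea: "\<epsilon> * \<alpha> > 0" using assms by simp
  have r01: "0 \<le> g0 / (g0 + g1)" "g0 / (g0 + g1) \<le> 1"
    using assms by (auto simp: divide_le_eq_1 intro: divide_nonneg_nonneg)
  have h01: "0 \<le> a0 / \<alpha>" "a0 / \<alpha> \<le> 1" using assms by auto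
  have L1: "\<bar>g0 / (g0 + g1) - a0 / \<alpha>\<bar> \<le> 1" using r01 h01 by linarith
  show ?thesis
  proof (cases "\<bar>g0 - a0\<bar> \<ge> \<epsilon> * \<alpha> \<or> \<bar>g1 - a1\<bar> \<ge> \<epsilon> * \<alpha>")
    case True
    have "(\<epsilon> * \<alpha>)^2 \<le> (g0 - a0)^2 + (g1 - a1)^2"
    proof -
      have "(\<epsilon> * \<alpha>)^2 \<le> (g0 - a0)^2 \<or> (\<epsilon> * \<alpha>)^2 \<le> (g1 - a1)^2"
        using True ea by (metis abs_le_square_iff abs_of_pos)
      then show ?thesis by (smt (verit) zero_le_power2)
    qed
    then have "1 \<le> ((g0 - a0)^2 + (g1 - a1)^2) / (\<epsilon> * \<alpha>)^2"
      using ea by (subst le_divide_eq_1_pos) auto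
    then show ?thesis using L1 assms by linarith
  next
    case False
    then have d0: "\<bar>g0 - a0\<bar> < \<epsilon> * \<alpha>" and d1: "\<bar>g1 - a1\<bar> < \<epsilon> * \<alpha>" by auto
    define S where "S = g0 + g1"
    have ea4: "\<epsilon> * \<alpha> \<le> \<alpha> / 4" using assms by (simp add: mult_right_mono)
    have "g0 > a0 - \<epsilon> * \<alpha>" "g1 > a1 - \<epsilon> * \<alpha>" using d0 d1 by (auto simp: abs_less_iff)
    then have S: "S \<ge> \<alpha> / 2" using ea4 assms(5) unfolding S_def by linarith
    have Spos: "S > 0" using S assms by simp
    have eq: "g0 / S - a0 / \<alpha> = (a1 * (g0 - a0) - a0 * (g1 - a1)) / (\<alpha> * S)"
      using Spos assms unfolding S_def by (simp add: field_simps) (simp add: algebra_simps flip: assms(5))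
    have num: "\<bar>a1 * (g0 - a0) - a0 * (g1 - a1)\<bar> \<le> a1 * (\<epsilon> * \<alpha>) + a0 * (\<epsilon> * \<alpha>)"
    proof -
      have "\<bar>a1 * (g0 - a0)\<bar> \<le> a1 * (\<epsilon> * \<alpha>)" using d0 assms by (simp add: abs_mult mult_left_mono)
      moreover have "\<bar>a0 * (g1 - a1)\<bar> \<le> a0 * (\<epsilon> * \<alpha>)" using d1 assms by (simp add: abs_mult mult_left_mono)
      ultimately show ?thesis by linarith
    qed
    have "a1 * (\<epsilon> * \<alpha>) + a0 * (\<epsilon> * \<alpha>) = \<epsilon> * \<alpha> * \<alpha>" by (simp add: algebra_simps flip: assms(5))
    then have num2: "\<bar>a1 * (g0 - a0) - a0 * (g1 - a1)\<bar> \<le> \<epsilon> * \<alpha> * \<alpha>" using num by linarith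
    have "\<bar>g0 / S - a0 / \<alpha>\<bar> = \<bar>a1 * (g0 - a0) - a0 * (g1 - a1)\<bar> / (\<alpha> * S)"
      unfolding eq using Spos assms by (simp add: abs_div)
    also have "\<dots> \<le> \<epsilon> * \<alpha> * \<alpha> / (\<alpha> * S)"
      by (rule divide_right_mono[OF num2]) (use Spos assms in simp)
    also have "\<dots> = \<epsilon> * \<alpha> / S" using assms by simp
    also have "\<dots> \<le> \<epsilon> * \<alpha> / (\<alpha> / 2)" using S Spos assms ea by (intro divide_left_mono) auto
    also have "\<dots> = 2 * \<epsilon>" using assms by simp
    finally have "\<bar>g0 / (g0 + g1) - a0 / \<alpha>\<bar> \<le> 2 * \<epsilon>" unfolding S_def .
    moreover have "0 \<le> ((g0 - a0)^2 + (g1 - a1)^2) / (\<epsilon> * \<alpha>)^2" by simp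
    ultimately show ?thesis by linarith
  qed
qed

lemma dirichlet2_bound:
  fixes a :: "nat \<Rightarrow> real" and \<alpha> \<epsilon> :: real
  assumes a0: "a 0 \<ge> 0" and a1: "a 1 \<ge> 0" and asum: "a 0 + a 1 = \<alpha>"
    and al: "\<alpha> > 0" and ep: "0 < \<epsilon>" "\<epsilon> \<le> 1/4"
  shows "integrable (dirichlet 2 a) (\<lambda>z. \<bar>z 0 - a 0 / \<alpha>\<bar>) \<and>
         (\<integral>z. \<bar>z 0 - a 0 / \<alpha>\<bar> \<partial>dirichlet 2 a) \<le> 1 / (\<epsilon>^2 * \<alpha>) + 2 * \<epsilon>"
proof -
  let ?M = "\<lambda>i. gamma_measure (a i)"
  let ?Pi = "PiM {..<2::nat} ?M"
  define \<psi> where "\<psi> = (\<lambda>g::nat\<Rightarrow>real. \<lambda>i\<in>{..<2::nat}. g i / (\<Sum>j<2. g j))"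
  have dir: "dirichlet 2 a = distr ?Pi (PiM {..<2} (\<lambda>_. borel)) \<psi>"
    unfolding dirichlet_def \<psi>_def ..
  have i2: "i = 0 \<or> i = 1" if "i < (2::nat)" for i using that by auto
  have ai: "a i \<ge> 0" if "i < 2" for i using i2[OF that] a0 a1 by auto
  have Mprob: "prob_space (?M i)" if "i \<in> {..<2}" for i using ai that gamma_facts(1) by simp
  interpret Pi: prob_space ?Pi by (rule prob_space_PiM) (rule Mprob)
  have \<psi>m: "\<psi> \<in> ?Pi \<rightarrow>\<^sub>M PiM {..<2} (\<lambda>_. borel)" unfolding \<psi>_def by measurable
  have comp: "distr ?Pi (?M i) (\<lambda>g. g i) = ?M i" if "i < 2" for i
    by (rule distr_PiM_component) (use Mprob that in auto)
  have AEi: "AE g in ?Pi. 0 \<le> g i" if "i < 2" for i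
  proof -
    have "AE t in distr ?Pi (?M i) (\<lambda>g. g i). 0 \<le> t" by (subst comp[OF that]) (rule gamma_facts(2)[OF ai[OF that]])
    then show ?thesis by (subst (asm) AE_distr_iff) (use that in auto)
  qed
  have var: "has_bochner_integral ?Pi (\<lambda>g. (g i - a i)^2) (a i)" if "i < 2" for i
  proof -
    have "has_bochner_integral (distr ?Pi (?M i) (\<lambda>g. g i)) (\<lambda>t. (t - a i)^2) (a i)"
      by (subst comp[OF that]) (rule gamma_var[OF ai[OF that]])
    then show ?thesis using that
      by (simp add: has_bochner_integral_iff integrable_distr_eq integral_distr)
  qed
  define f where "f = (\<lambda>g::nat\<Rightarrow>real. \<bar>g 0 / (g 0 + g 1) - a 0 / \<alpha>\<bar>)"
  define B where "B = (\<lambda>g::nat\<Rightarrow>real. ((g 0 - a 0)^2 + (g 1 - a 1)^2) / (\<epsilon> * \<alpha>)^2 + 2 * \<epsilon>)"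
  have fm: "f \<in> borel_measurable ?Pi" unfolding f_def by measurable
  have comp2: "(\<lambda>z. \<bar>z 0 - a 0 / \<alpha>\<bar>) (\<psi> g) = f g" for g
    unfolding \<psi>_def f_def by (simp add: numeral_2_eq_2)
  have AE01: "AE g in ?Pi. 0 \<le> g 0 \<and> 0 \<le> g 1" using AEi[of 0] AEi[of 1] by auto
  have fint: "integrable ?Pi f"
  proof (rule Pi.integrable_const_bound[where B=2])
    show "AE g in ?Pi. norm (f g) \<le> 2" using AE01
    proof eventually_elim
      case (elim g)
      then have "0 \<le> g 0 / (g 0 + g 1)" "g 0 / (g 0 + g 1) \<le> 1"
        by (auto simp: divide_le_eq_1 intro: divide_nonneg_nonneg)
      moreover have "0 \<le> a 0 / \<alpha>" "a 0 / \<alpha> \<le> 1" using a0 a1 asum al by auto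
      ultimately show ?case unfolding f_def by auto
    qed
  qed (rule fm)
  have Bint: "has_bochner_integral ?Pi B ((a 0 + a 1) / (\<epsilon> * \<alpha>)^2 + 2 * \<epsilon>)"
    unfolding B_def
    by (intro has_bochner_integral_add has_bochner_integral_divide_zero var)
       (auto simp: has_bochner_integral_iff Pi.prob_space)
  have le: "integral\<^sup>L ?Pi f \<le> integral\<^sup>L ?Pi B"
  proof (rule integral_mono_AE[OF fint])
    show "integrable ?Pi B" using Bint by (simp add: has_bochner_integral_iff)
    show "AE g in ?Pi. f g \<le> B g" using AE01
      by eventually_elim (unfold f_def B_def, rule ratio_bound, use a0 a1 asum al ep in auto)
  qed
  have "(a 0 + a 1) / (\<epsilon> * \<alpha>)^2 + 2 * \<epsilon> = 1 / (\<epsilon>^2 * \<alpha>) + 2 * \<epsilon>"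
    using asum al ep by (simp add: power2_eq_square field_simps)
  then have IB: "integral\<^sup>L ?Pi B = 1 / (\<epsilon>^2 * \<alpha>) + 2 * \<epsilon>"
    using has_bochner_integral_integral_eq[OF Bint] by simp
  have m2: "(\<lambda>z::nat\<Rightarrow>real. \<bar>z 0 - a 0 / \<alpha>\<bar>) \<in> borel_measurable (PiM {..<2} (\<lambda>_. borel))" by measurable
  have "integrable (dirichlet 2 a) (\<lambda>z. \<bar>z 0 - a 0 / \<alpha>\<bar>)"
    unfolding dir using fint by (subst integrable_distr_eq[OF \<psi>m m2]) (simp add: comp2)
  moreover have "(\<integral>z. \<bar>z 0 - a 0 / \<alpha>\<bar> \<partial>dirichlet 2 a) = integral\<^sup>L ?Pi f"
    unfolding dir by (subst integral_distr[OF \<psi>m m2]) (simp add: comp2)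
  ultimately show ?thesis using le IB by simp
qed

lemma dp_set_bound:
  fixes M :: "'a measure" and P :: "'a \<Rightarrow> real measure" and H :: "real set \<Rightarrow> real"
  assumes M: "prob_space M" and DP: "dirichlet_process M P \<alpha> H" and al: "\<alpha> > 0"
    and A: "A \<in> sets borel" and H0: "H A \<ge> 0" "H (- A) \<ge> 0" "H A + H (- A) = 1"
    and ep: "0 < \<epsilon>" "\<epsilon> \<le> 1/4"
  shows "integrable M (\<lambda>\<omega>. \<bar>measure (P \<omega>) A - H A\<bar>) \<and>
         (\<integral>\<omega>. \<bar>measure (P \<omega>) A - H A\<bar> \<partial>M) \<le> 1 / (\<epsilon>^2 * \<alpha>) + 2 * \<epsilon>"
proof -
  define A' where "A' = (\<lambda>i::nat. if i = 0 then A else - A)"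
  have Pm: "P \<in> M \<rightarrow>\<^sub>M prob_algebra borel" using DP unfolding dirichlet_process_def by blast
  have spec: "\<And>k (A :: nat \<Rightarrow> real set). k \<ge> 1 \<Longrightarrow> (\<forall>i<k. A i \<in> sets borel) \<Longrightarrow>
        disjoint_family_on A {..<k} \<Longrightarrow> (\<Union>i<k. A i) = UNIV \<Longrightarrow>
        distr M (PiM {..<k} (\<lambda>_. borel)) (\<lambda>\<omega>. \<lambda>i\<in>{..<k}. measure (P \<omega>) (A i))
          = dirichlet k (\<lambda>i. \<alpha> * H (A i))"
    using DP unfolding dirichlet_process_def by blast
  have i2: "i = 0 \<or> i = 1" if "i < (2::nat)" for i using that by auto
  have A'sets: "\<forall>i<2. A' i \<in> sets borel" using A i2 unfolding A'_def by auto
  have disj: "disjoint_family_on A' {..<2}"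
    unfolding disjoint_family_on_def A'_def using i2 by auto
  have un: "(\<Union>i<2. A' i) = UNIV"
  proof (intro set_eqI iffI)
    fix x :: real
    show "x \<in> (\<Union>i<2. A' i)"
    proof (cases "x \<in> A")
      case True
      then show ?thesis by (intro UN_I[of 0]) (auto simp: A'_def)
    next
      case False
      then show ?thesis by (intro UN_I[of 1]) (auto simp: A'_def)
    qed
  qed auto
  define \<phi> where "\<phi> = (\<lambda>\<omega>. \<lambda>i\<in>{..<2::nat}. measure (P \<omega>) (A' i))"
  have eq: "distr M (PiM {..<2} (\<lambda>_. borel)) \<phi> = dirichlet 2 (\<lambda>i. \<alpha> * H (A' i))"
    unfolding \<phi>_def by (rule spec) (use A'sets disj un in auto)
  have mi: "(\<lambda>\<omega>. measure (P \<omega>) B) \<in> borel_measurable M" if "B \<in> sets borel" for B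
    using measurable_compose[OF Pm measurable_measure_prob_algebra[OF that]] by simp
  have \<phi>m: "\<phi> \<in> M \<rightarrow>\<^sub>M PiM {..<2} (\<lambda>_. borel)"
    unfolding \<phi>_def by (rule measurable_restrict) (use mi A'sets in auto)
  define a where "a = (\<lambda>i. \<alpha> * H (A' i))"
  have a0: "a 0 = \<alpha> * H A" and a1: "a 1 = \<alpha> * H (- A)" unfolding a_def A'_def by auto
  have asum: "a 0 + a 1 = \<alpha>" using H0 unfolding a0 a1 by (simp add: algebra_simps flip: distrib_left)
  have ha: "a 0 / \<alpha> = H A" using al unfolding a0 by simp
  have D: "integrable (dirichlet 2 a) (\<lambda>z. \<bar>z 0 - a 0 / \<alpha>\<bar>) \<and>
         (\<integral>z. \<bar>z 0 - a 0 / \<alpha>\<bar> \<partial>dirichlet 2 a) \<le> 1 / (\<epsilon>^2 * \<alpha>) + 2 * \<epsilon>"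
    by (rule dirichlet2_bound) (use a0 a1 asum al ep H0 in auto)
  have m2: "(\<lambda>z::nat\<Rightarrow>real. \<bar>z 0 - a 0 / \<alpha>\<bar>) \<in> borel_measurable (PiM {..<2} (\<lambda>_. borel))" by measurable
  have c: "(\<lambda>z. \<bar>z 0 - a 0 / \<alpha>\<bar>) (\<phi> \<omega>) = \<bar>measure (P \<omega>) A - H A\<bar>" for \<omega>
    unfolding \<phi>_def ha by (simp add: A'_def)
  have dd: "dirichlet 2 a = distr M (PiM {..<2} (\<lambda>_. borel)) \<phi>" using eq unfolding a_def by simp
  show ?thesis using D unfolding dd
    by (simp add: integrable_distr_eq[OF \<phi>m m2] integral_distr[OF \<phi>m m2] c)
qed

lemma bracket:
  fixes H H' :: "real \<Rightarrow> real" and k :: nat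
  assumes k: "k \<ge> 1"
    and H01: "\<And>t. 0 \<le> H t \<and> H t \<le> 1"
    and Hmono: "\<And>s t. s \<le> t \<Longrightarrow> H s \<le> H t"
    and Hrc: "\<And>t c. (\<And>s. t < s \<Longrightarrow> c \<le> H s) \<Longrightarrow> c \<le> H t"
    and Hlc: "\<And>t c. (\<And>s. s < t \<Longrightarrow> H s \<le> c) \<Longrightarrow> H' t \<le> c"
    and Hbot: "\<And>c. c > 0 \<Longrightarrow> \<exists>t. H t < c"
    and Htop: "\<And>c. c < 1 \<Longrightarrow> \<exists>t. H t > c"
  shows "\<exists>T. finite T \<and> card T \<le> k \<and> (\<forall>F F'. (\<forall>t. 0 \<le> F t \<and> F t \<le> 1) \<longrightarrow>
            (\<forall>s t. s \<le> t \<longrightarrow> F s \<le> F t) \<longrightarrow> (\<forall>s t. s < t \<longrightarrow> F s \<le> F' t) \<longrightarrow>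
            (\<forall>t. \<bar>F t - H t\<bar> \<le> 1 / k + (\<Sum>s\<in>T. \<bar>F s - H s\<bar> + \<bar>F' s - H' s\<bar>)))"
proof -
  have kpos: "real k > 0" using k by simp
  define S where "S j = {s. real j / k \<le> H s}" for j :: nat
  define q where "q j = Inf (S j)" for j
  have ne: "S j \<noteq> {}" if "j < k" for j
  proof -
    have "real j / k < 1" using that kpos by simp
    then obtain t where "H t > real j / k" using Htop by blast
    then show ?thesis unfolding S_def by (auto intro: less_imp_le)
  qed
  have bdd: "bdd_below (S j)" if "1 \<le> j" for j
  proof -
    have "real j / k > 0" using that kpos by simp
    then obtain b where b: "H b < real j / k" using Hbot by blast
    have "b \<le> s" if "s \<in> S j" for s
    proof (rule ccontr)
      assume "\<not> b \<le> s"
      then have "H s \<le> H b" using Hmono by simp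
      then show False using b that unfolding S_def by simp
    qed
    then show ?thesis by (rule bdd_belowI)
  qed
  have qa: "real j / k \<le> H (q j)" if hj: "1 \<le> j" "j < k" for j
  proof (rule Hrc)
    fix s assume "q j < s"
    then obtain s' where "s' \<in> S j" "s' < s"
      using cInf_less_iff[OF ne[OF hj(2)] bdd[OF hj(1)]] unfolding q_def by blast
    then show "real j / k \<le> H s" using Hmono[of s' s] unfolding S_def by simp
  qed
  have qb: "H' (q j) \<le> real j / k" if hj: "1 \<le> j" "j < k" for j
  proof (rule Hlc)
    fix s assume s: "s < q j"
    have "s \<notin> S j"
    proof
      assume "s \<in> S j"
      then have "q j \<le> s" unfolding q_def by (rule cInf_lower[OF _ bdd[OF hj(1)]])
      then show False using s by simp
    qed
    then show "H s \<le> real j / k" unfolding S_def by simp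
  qed
  have qc: "q j \<le> t" if "1 \<le> j" "real j / k \<le> H t" for j t
    unfolding q_def using that by (intro cInf_lower[OF _ bdd[OF that(1)]]) (simp add: S_def)
  have qd: "t < q j" if "1 \<le> j" "j < k" "H t < real j / k" for j t
  proof -
    have "t \<le> q j" unfolding q_def
    proof (rule cInf_greatest[OF ne[OF that(2)]])
      fix s assume "s \<in> S j"
      then have "real j / k \<le> H s" unfolding S_def by simp
      then show "t \<le> s" using Hmono[of s t] that(3) by (cases "s < t") auto
    qed
    moreover have "q j \<noteq> t" using qa[OF that(1,2)] that(3) by auto
    ultimately show ?thesis by simp
  qed
  define T where "T = q ` {1..<k}"
  have finT: "finite T" unfolding T_def by simp
  have cardT: "card T \<le> k" unfolding T_def using card_image_le[of "{1..<k}" q] by simp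
  have main: "\<bar>F t - H t\<bar> \<le> 1 / k + (\<Sum>s\<in>T. \<bar>F s - H s\<bar> + \<bar>F' s - H' s\<bar>)"
    if F01: "\<forall>t. 0 \<le> F t \<and> F t \<le> 1" and Fmono: "\<forall>s t. s \<le> t \<longrightarrow> F s \<le> F t"
      and FF': "\<forall>s t. s < t \<longrightarrow> F s \<le> F' t" for F F' :: "real \<Rightarrow> real" and t
  proof -
    define E where "E = (\<Sum>s\<in>T. \<bar>F s - H s\<bar> + \<bar>F' s - H' s\<bar>)"
    have E0: "E \<ge> 0" unfolding E_def by (intro sum_nonneg) auto
    have ET: "\<bar>F s - H s\<bar> \<le> E \<and> \<bar>F' s - H' s\<bar> \<le> E" if "s \<in> T" for s
    proof -
      have "\<bar>F s - H s\<bar> + \<bar>F' s - H' s\<bar> \<le> E"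
        unfolding E_def by (rule member_le_sum[OF that _ finT]) auto
      moreover have "0 \<le> \<bar>F s - H s\<bar>" "0 \<le> \<bar>F' s - H' s\<bar>" by auto
      ultimately show ?thesis by linarith
    qed
    define c where "c = H t"
    have c01: "0 \<le> c" "c \<le> 1" using H01 unfolding c_def by auto
    define j where "j = nat \<lfloor>real k * c\<rfloor>"
    have j1: "real j \<le> real k * c" and j2: "real k * c < real j + 1"
      unfolding j_def using c01 kpos by (auto simp: of_nat_nat floor_le_iff)
    have up: "F t - H t \<le> 1 / k + E"
    proof (cases "k \<le> j + 1")
      case True
      then have "real k - 1 \<le> real k * c" using j1 by linarith
      then have "1 - 1 / k \<le> c" using kpos by (simp add: field_simps)
      then show ?thesis using F01 E0 unfolding c_def by (smt (verit))
    next
      case False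
      then have jk: "j + 1 < k" by simp
      have "H t < real (j + 1) / k" using j2 kpos unfolding c_def by (simp add: field_simps)
      then have "t < q (j + 1)" using qd[of "j + 1"] jk by simp
      then have "F t \<le> F' (q (j + 1))" using FF' by simp
      moreover have "q (j + 1) \<in> T" unfolding T_def using jk by auto
      moreover have "H' (q (j + 1)) \<le> real (j + 1) / k" using qb[of "j + 1"] jk by simp
      moreover have "real (j + 1) / k \<le> c + 1 / k" using j1 kpos by (simp add: field_simps)
      ultimately show ?thesis using ET[of "q (j + 1)"] unfolding c_def by (smt (verit))
    qed
    have lo: "H t - F t \<le> 1 / k + E"
    proof (cases "c \<le> 1 / k")
      case True
      then show ?thesis using F01 E0 unfolding c_def by (smt (verit))
    next
      case False
      then have kc: "real k * c > 1" using kpos by (simp add: field_simps)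
      then have "j \<ge> 1" using j2 by linarith
      have "k \<ge> 2"
      proof (rule ccontr)
        assume "\<not> k \<ge> 2" then have "k = 1" using k by simp
        then show False using kc c01 by simp
      qed
      define j' where "j' = min j (k - 1)"
      have j'1: "1 \<le> j'" "j' < k" unfolding j'_def using \<open>j \<ge> 1\<close> \<open>k \<ge> 2\<close> by auto
      have "real j' \<le> real j" unfolding j'_def by simp
      then have "real j' / k \<le> c" using j1 kpos by (simp add: field_simps)
      then have "q j' \<le> t" using qc[OF j'1(1)] unfolding c_def by simp
      then have "F (q j') \<le> F t" using Fmono by simp
      moreover have "q j' \<in> T" unfolding T_def using j'1 by auto
      moreover have "real j' / k \<le> H (q j')" using qa[OF j'1] .
      moreover have "c - 1 / k \<le> real j' / k"
      proof (cases "j \<le> k - 1")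
        case True
        then have "j' = j" unfolding j'_def by simp
        have "c - 1 / k = (real k * c - 1) / k" using kpos by (simp add: field_simps)
        also have "\<dots> \<le> real j / k" by (rule divide_right_mono) (use j2 in linarith, simp)
        finally show ?thesis using \<open>j' = j\<close> by simp
      next
        case False
        then have "j' = k - 1" unfolding j'_def by simp
        then have "real j' = real k - 1" using \<open>k \<ge> 2\<close> by simp
        have "c - 1 / k \<le> 1 - 1 / k" using c01 by simp
        also have "1 - 1 / k = (real k - 1) / k" using kpos by (simp add: field_simps)
        finally show ?thesis using \<open>real j' = real k - 1\<close> by simp
      qed
      ultimately show ?thesis using ET[of "q j'"] unfolding c_def by (smt (verit))
    qed
    show ?thesis using up lo unfolding E_def by (simp add: abs_le_iff)
  qed
  show ?thesis
    apply (rule exI[of _ T])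
    apply (intro conjI finT cardT allI impI)
    apply (rule main)
      apply assumption+
    done
qed

lemma card_as_sum:
  "real (card {i \<in> {..<(n::nat)}. x i \<in> A}) = (\<Sum>i<n. indicator A (x i))"
proof -
  have "(\<Sum>i<n. indicator A (x i) :: real) = (\<Sum>i<n. of_bool (x i \<in> A))" by (simp add: indicator_def)
  also have "\<dots> = real (card ({..<n} \<inter> {i. x i \<in> A}))" by (subst sum_of_bool_eq) auto
  also have "{..<n} \<inter> {i. x i \<in> A} = {i \<in> {..<n}. x i \<in> A}" by auto
  finally show ?thesis by simp
qed

lemma post_base_sum:
  "post_base K G x n A = (K * measure G A + (\<Sum>i<n. indicator A (x i))) / (K + real n)"
  unfolding post_base_def card_as_sum ..

lemma ind_right: "((\<lambda>s. indicator {..s} y :: real) \<longlongrightarrow> indicator {..t} y) (at_right (t::real))"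
proof (rule tendsto_eventually)
  show "\<forall>\<^sub>F s in at_right t. indicator {..s} y = (indicator {..t} y :: real)"
  proof (cases "y \<le> t")
    case True
    show ?thesis using eventually_at_right_less[of t] by eventually_elim (use True in auto)
  next
    case False
    then have "t < y" by simp
    show ?thesis using eventually_at_right_real[OF \<open>t < y\<close>] by eventually_elim (auto simp: indicator_def)
  qed
qed

lemma ind_left: "((\<lambda>s. indicator {..s} y :: real) \<longlongrightarrow> indicator {..<t} y) (at_left (t::real))"
proof (rule tendsto_eventually)
  show "\<forall>\<^sub>F s in at_left t. indicator {..s} y = (indicator {..<t} y :: real)"
  proof (cases "y < t")
    case True
    show ?thesis using eventually_at_left_real[OF True] by eventually_elim (auto simp: indicator_def)
  next
    case False
    have tt: "t - 1 < t" by simp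
    show ?thesis using eventually_at_left_real[OF tt] by eventually_elim (use False in \<open>auto simp: indicator_def\<close>)
  qed
qed

lemma ind_bot: "((\<lambda>s. indicator {..s} (y::real) :: real) \<longlongrightarrow> 0) at_bot"
proof (rule tendsto_eventually)
  show "\<forall>\<^sub>F s in at_bot. indicator {..s} y = (0::real)"
    unfolding eventually_at_bot_linorder by (intro exI[of _ "y - 1"]) (auto simp: indicator_def)
qed

lemma ind_top: "((\<lambda>s. indicator {..s} (y::real) :: real) \<longlongrightarrow> 1) at_top"
proof (rule tendsto_eventually)
  show "\<forall>\<^sub>F s in at_top. indicator {..s} y = (1::real)"
    unfolding eventually_at_top_linorder by (intro exI[of _ "y"]) (auto simp: indicator_def)
qed

lemma post_base_props:
  fixes K :: real and G :: "real measure" and x :: "nat \<Rightarrow> real" and n :: nat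
  assumes K: "K > 0" and G: "prob_space G" "sets G = sets borel"
  defines "Hc \<equiv> (\<lambda>t. post_base K G x n {..t})" and "Hl \<equiv> (\<lambda>t. post_base K G x n {..<t})"
  shows "\<And>t. 0 \<le> Hc t \<and> Hc t \<le> 1"
    and "\<And>s t. s \<le> t \<Longrightarrow> Hc s \<le> Hc t"
    and "\<And>t c. (\<And>s. t < s \<Longrightarrow> c \<le> Hc s) \<Longrightarrow> c \<le> Hc t"
    and "\<And>t c. (\<And>s. s < t \<Longrightarrow> Hc s \<le> c) \<Longrightarrow> Hl t \<le> c"
    and "\<And>c. c > 0 \<Longrightarrow> \<exists>t. Hc t < c"
    and "\<And>c. c < 1 \<Longrightarrow> \<exists>t. Hc t > c"
proof -
  interpret G: real_distribution G using G by (simp add: real_distribution_def real_distribution_axioms_def)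
  have Kn: "K + real n > 0" using K by simp
  have Hc_eq: "Hc t = (K * cdf G t + (\<Sum>i<n. indicator {..t} (x i))) / (K + real n)" for t
    unfolding Hc_def post_base_sum by (simp add: cdf_def)
  have Hl_eq: "Hl t = (K * measure G {..<t} + (\<Sum>i<n. indicator {..<t} (x i))) / (K + real n)" for t
    unfolding Hl_def post_base_sum ..
  have Hc_eqf: "Hc = (\<lambda>s. (K * cdf G s + (\<Sum>i<n. indicator {..s} (x i))) / (K + real n))"
    using Hc_eq by auto
  show "0 \<le> Hc t \<and> Hc t \<le> 1" for t
  proof -
    have "0 \<le> cdf G t" "cdf G t \<le> 1" by (auto simp: G.cdf_nonneg G.cdf_bounded_prob)
    moreover have "0 \<le> (\<Sum>i<n. indicator {..t} (x i) :: real)" by (intro sum_nonneg) auto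
    moreover have "(\<Sum>i<n. indicator {..t} (x i) :: real) \<le> (\<Sum>i<n. 1)" by (intro sum_mono) (auto simp: indicator_def)
    ultimately show ?thesis using K Kn unfolding Hc_eq
      by (auto simp: divide_le_eq_1 intro!: divide_nonneg_pos add_nonneg_nonneg add_mono mult_left_le)
  qed
  show "Hc s \<le> Hc t" if "s \<le> t" for s t
  proof -
    have "cdf G s \<le> cdf G t" using that by (rule G.cdf_nondecreasing)
    moreover have "(\<Sum>i<n. indicator {..s} (x i) :: real) \<le> (\<Sum>i<n. indicator {..t} (x i))"
      using that by (intro sum_mono) (auto simp: indicator_def)
    ultimately show ?thesis unfolding Hc_eq using K Kn
      by (intro divide_right_mono add_mono mult_left_mono) auto
  qed
  have limr: "(Hc \<longlongrightarrow> Hc t) (at_right t)" for t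
  proof -
    have "(cdf G \<longlongrightarrow> cdf G t) (at_right t)" using G.cdf_is_right_cont[of t] by (simp add: continuous_within)
    then show ?thesis unfolding Hc_eqf Hc_eq[of t] using Kn
      by (intro tendsto_intros ind_right) simp_all
  qed
  have liml: "(Hc \<longlongrightarrow> Hl t) (at_left t)" for t
    unfolding Hc_eqf Hl_eq using G.cdf_at_left[of t] Kn
    by (intro tendsto_intros ind_left) auto
  have limb: "(Hc \<longlongrightarrow> 0) at_bot"
  proof -
    have "(Hc \<longlongrightarrow> (K * 0 + (\<Sum>i<n. 0)) / (K + real n)) at_bot"
      unfolding Hc_eqf using G.cdf_lim_at_bot Kn by (intro tendsto_intros ind_bot) auto
    then show ?thesis by simp
  qed
  have limt: "(Hc \<longlongrightarrow> 1) at_top"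
  proof -
    have "(Hc \<longlongrightarrow> (K * 1 + (\<Sum>i<n. 1)) / (K + real n)) at_top"
      unfolding Hc_eqf using G.cdf_lim_at_top_prob Kn by (intro tendsto_intros ind_top) auto
    then show ?thesis using Kn by simp
  qed
  show "c \<le> Hc t" if "\<And>s. t < s \<Longrightarrow> c \<le> Hc s" for t c
  proof (rule tendsto_le[OF _ limr tendsto_const])
    show "\<forall>\<^sub>F s in at_right t. c \<le> Hc s" using eventually_at_right_less[of t] by eventually_elim (rule that)
  qed simp
  show "Hl t \<le> c" if "\<And>s. s < t \<Longrightarrow> Hc s \<le> c" for t c
  proof (rule tendsto_le[OF _ tendsto_const liml])
    have tt: "t - 1 < t" by simp
    show "\<forall>\<^sub>F s in at_left t. Hc s \<le> c" using eventually_at_left_real[OF tt] by eventually_elim (auto intro: that)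
  qed simp
  show "\<exists>t. Hc t < c" if "c > 0" for c
  proof -
    have "\<forall>\<^sub>F s in at_bot. Hc s < c" using order_tendstoD(2)[OF limb that] .
    then obtain N where "\<And>s. s \<le> N \<Longrightarrow> Hc s < c" unfolding eventually_at_bot_linorder by blast
    then show ?thesis by blast
  qed
  show "\<exists>t. Hc t > c" if "c < 1" for c
  proof -
    have "\<forall>\<^sub>F s in at_top. c < Hc s" using order_tendstoD(1)[OF limt that] .
    then obtain N where "\<And>s. s \<ge> N \<Longrightarrow> c < Hc s" unfolding eventually_at_top_linorder by blast
    then show ?thesis by blast
  qed
qed

lemma post_base_bracket:
  fixes K :: real and G :: "real measure" and x :: "nat \<Rightarrow> real" and n k :: nat
  assumes K: "K > 0" and G: "prob_space G" "sets G = sets borel" and k: "k \<ge> 1"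
  shows "\<exists>T. finite T \<and> card T \<le> k \<and> (\<forall>\<mu>. prob_space \<mu> \<longrightarrow> sets \<mu> = sets borel \<longrightarrow>
    (\<forall>t. \<bar>measure \<mu> {..t} - post_base K G x n {..t}\<bar> \<le> 1 / k +
      (\<Sum>s\<in>T. \<bar>measure \<mu> {..s} - post_base K G x n {..s}\<bar> + \<bar>measure \<mu> {..<s} - post_base K G x n {..<s}\<bar>)))"
proof -
  note pp = post_base_props[OF K G, where x=x and n=n]
  note bb = bracket[where H="\<lambda>t. post_base K G x n {..t}" and H'="\<lambda>t. post_base K G x n {..<t}", OF k pp]
  obtain T where TP: "finite T \<and> card T \<le> k \<and> (\<forall>F F'. (\<forall>t. 0 \<le> F t \<and> F t \<le> 1) \<longrightarrow>
            (\<forall>s t. s \<le> t \<longrightarrow> F s \<le> F t) \<longrightarrow> (\<forall>s t. s < t \<longrightarrow> F s \<le> F' t) \<longrightarrow>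
            (\<forall>t. \<bar>F t - post_base K G x n {..t}\<bar> \<le> 1 / k + (\<Sum>s\<in>T. \<bar>F s - post_base K G x n {..s}\<bar> + \<bar>F' s - post_base K G x n {..<s}\<bar>)))"
    by (rule exE[OF bb])
  have T: "finite T" "card T \<le> k" using TP by simp_all
  have TT: "\<forall>F F'. (\<forall>t. 0 \<le> F t \<and> F t \<le> 1) \<longrightarrow>
            (\<forall>s t. s \<le> t \<longrightarrow> F s \<le> F t) \<longrightarrow> (\<forall>s t. s < t \<longrightarrow> F s \<le> F' t) \<longrightarrow>
            (\<forall>t. \<bar>F t - post_base K G x n {..t}\<bar> \<le> 1 / k + (\<Sum>s\<in>T. \<bar>F s - post_base K G x n {..s}\<bar> + \<bar>F' s - post_base K G x n {..<s}\<bar>))"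
    using TP by (elim conjE)
  have "\<forall>t. \<bar>measure \<mu> {..t} - post_base K G x n {..t}\<bar> \<le> 1 / k +
      (\<Sum>s\<in>T. \<bar>measure \<mu> {..s} - post_base K G x n {..s}\<bar> + \<bar>measure \<mu> {..<s} - post_base K G x n {..<s}\<bar>)"
    if mu: "prob_space \<mu>" "sets \<mu> = sets borel" for \<mu>
  proof -
    interpret mu: prob_space \<mu> by (rule mu(1))
    have a1: "\<forall>t. 0 \<le> measure \<mu> {..t} \<and> measure \<mu> {..t} \<le> 1" by simp
    have a2: "\<forall>s t. s \<le> t \<longrightarrow> measure \<mu> {..s} \<le> measure \<mu> {..t}"
    proof (intro allI impI)
      fix s t :: real assume "s \<le> t"
      then show "measure \<mu> {..s} \<le> measure \<mu> {..t}" by (intro mu.finite_measure_mono) (use mu(2) in auto)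
    qed
    have a3: "\<forall>s t. s < t \<longrightarrow> measure \<mu> {..s} \<le> measure \<mu> {..<t}"
    proof (intro allI impI)
      fix s t :: real assume "s < t"
      then show "measure \<mu> {..s} \<le> measure \<mu> {..<t}" by (intro mu.finite_measure_mono) (use mu(2) in auto)
    qed
    show ?thesis
      using TT[rule_format, of "\<lambda>t. measure \<mu> {..t}" "\<lambda>t. measure \<mu> {..<t}", OF a1[rule_format] a2[rule_format] a3[rule_format]] by blast
  qed
  then show ?thesis using T by blast
qed

lemma post_base_compl:
  fixes K :: real and G :: "real measure" and x :: "nat \<Rightarrow> real" and n :: nat
  assumes K: "K > 0" and G: "prob_space G" "sets G = sets borel" and A: "A \<in> sets borel"
  shows "post_base K G x n A \<ge> 0" "post_base K G x n (- A) \<ge> 0"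
    "post_base K G x n A + post_base K G x n (- A) = 1"
proof -
  interpret G: prob_space G by (rule G(1))
  have sp: "space G = UNIV" using sets_eq_imp_space_eq[OF G(2)] by simp
  have Kn: "K + real n > 0" using K by simp
  have "measure G (space G - A) = 1 - measure G A" using A G(2) by (intro G.prob_compl) auto
  then have m: "measure G (- A) = 1 - measure G A" using sp by (simp add: Compl_eq_Diff_UNIV)
  have s: "(\<Sum>i<n. indicator A (x i)) + (\<Sum>i<n. indicator (- A) (x i)) = (\<Sum>i<n. 1 :: real)"
    by (subst sum.distrib[symmetric]) (intro sum.cong, auto simp: indicator_def)
  show "post_base K G x n A \<ge> 0" "post_base K G x n (- A) \<ge> 0"
    unfolding post_base_def using K Kn by (auto intro!: divide_nonneg_pos add_nonneg_nonneg)
  show "post_base K G x n A + post_base K G x n (- A) = 1"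
  proof -
    have "K * measure G A + K * measure G (- A) = K" using m by (metis distrib_left mult.right_neutral add_diff_cancel_left' diff_add_cancel)
    then show ?thesis unfolding post_base_sum using Kn s by (simp add: field_simps add_divide_distrib[symmetric])
  qed
qed

lemma sup_close:
  fixes f g :: "real \<Rightarrow> real"
  assumes c: "\<And>t. \<bar>f t - g t\<bar> \<le> c" and bf: "\<And>t. \<bar>f t\<bar> \<le> B" and bg: "\<And>t. \<bar>g t\<bar> \<le> B"
  shows "\<bar>(SUP t. f t) - (SUP t. g t)\<bar> \<le> c"
proof -
  have bdf: "bdd_above (range f)" using bf by (auto intro!: bdd_aboveI[of _ B] simp: abs_le_iff)
  have bdg: "bdd_above (range g)" using bg by (auto intro!: bdd_aboveI[of _ B] simp: abs_le_iff)
  have "(SUP t. f t) \<le> (SUP t. g t) + c"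
  proof (rule cSUP_least)
    fix t
    have "g t \<le> (SUP t. g t)" by (rule cSUP_upper[OF _ bdg]) simp
    then show "f t \<le> (SUP t. g t) + c" using c[of t] by (simp add: abs_le_iff)
  qed simp
  moreover have "(SUP t. g t) \<le> (SUP t. f t) + c"
  proof (rule cSUP_least)
    fix t
    have "f t \<le> (SUP t. f t)" by (rule cSUP_upper[OF _ bdf]) simp
    then show "g t \<le> (SUP t. f t) + c" using c[of t] by (simp add: abs_le_iff)
  qed simp
  ultimately show ?thesis by (simp add: abs_le_iff)
qed

lemma kd_rat:
  assumes mu: "prob_space \<mu>" "sets \<mu> = sets borel" and nu: "prob_space \<nu>" "sets \<nu> = sets borel"
  shows "kolmogorov_dist \<mu> \<nu> = (SUP q\<in>\<rat>. \<bar>measure \<mu> {..q} - measure \<nu> {..q}\<bar>)"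
proof -
  interpret m: real_distribution \<mu> using mu by (simp add: real_distribution_def real_distribution_axioms_def)
  interpret n: real_distribution \<nu> using nu by (simp add: real_distribution_def real_distribution_axioms_def)
  define f where "f t = \<bar>cdf \<mu> t - cdf \<nu> t\<bar>" for t
  have fb: "\<bar>f t\<bar> \<le> 1" for t
    unfolding f_def using m.cdf_nonneg[of t] m.cdf_bounded_prob[of t] n.cdf_nonneg[of t] n.cdf_bounded_prob[of t]
    by (simp add: abs_le_iff)
  have bdd: "bdd_above (f ` A)" for A using fb by (auto intro!: bdd_aboveI[of _ 1] simp: abs_le_iff)
  have cont: "(f \<longlongrightarrow> f t) (at_right t)" for t
  proof -
    have "(cdf \<mu> \<longlongrightarrow> cdf \<mu> t) (at_right t)" using m.cdf_is_right_cont[of t] by (simp add: continuous_within)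
    moreover have "(cdf \<nu> \<longlongrightarrow> cdf \<nu> t) (at_right t)" using n.cdf_is_right_cont[of t] by (simp add: continuous_within)
    ultimately show ?thesis unfolding f_def by (intro tendsto_intros)
  qed
  have "(SUP t. f t) = (SUP q\<in>\<rat>. f q)"
  proof (rule antisym)
    show "(SUP t. f t) \<le> (SUP q\<in>\<rat>. f q)"
    proof (rule cSUP_least)
      fix t
      show "f t \<le> (SUP q\<in>\<rat>. f q)"
      proof (rule field_le_epsilon)
        fix e :: real assume e: "e > 0"
        have "\<forall>\<^sub>F s in at_right t. dist (f s) (f t) < e" using cont[of t] e by (rule tendstoD)
        then obtain b where b: "b > t" "\<And>s. t < s \<Longrightarrow> s < b \<Longrightarrow> dist (f s) (f t) < e"
          unfolding eventually_at_right_field by blast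
        obtain q where q: "q \<in> \<rat>" "t < q" "q < b" using Rats_dense_in_real[OF b(1)] by blast
        have "f q \<le> (SUP q\<in>\<rat>. f q)" by (rule cSUP_upper[OF q(1) bdd])
        moreover have "dist (f q) (f t) < e" using b(2) q by simp
        ultimately show "f t \<le> (SUP q\<in>\<rat>. f q) + e" by (simp add: dist_real_def abs_less_iff)
      qed
    qed simp
    show "(SUP q\<in>\<rat>. f q) \<le> (SUP t. f t)"
      by (rule cSUP_subset_mono) (auto intro: bdd simp: Rats_def)
  qed
  then show ?thesis unfolding kolmogorov_dist_def f_def cdf_def by simp
qed

theorem theorem6:
  fixes K :: real and G :: "real measure" and x y :: "nat \<Rightarrow> real"
  assumes K_pos: "K > 0"
    and G_prob: "prob_space G" and G_sets: "sets G = sets borel"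
    and G_dom: "\<exists>(\<nu>1 :: real measure) f C. C > 0 \<and> sets \<nu>1 = sets borel \<and>
                  f \<in> borel_measurable borel \<and> (\<forall>t. 0 \<le> f t \<and> f t \<le> C) \<and>
                  G = density \<nu>1 (\<lambda>t. ennreal (f t))"
  shows "\<forall>e>0. \<exists>N. \<forall>n\<ge>N. \<forall>m\<ge>N. \<forall>(M :: 'a measure) P1 P2.
           prob_space M \<longrightarrow>
           dirichlet_process M P1 (K + real n) (post_base K G x n) \<longrightarrow>
           dirichlet_process M P2 (K + real m) (post_base K G y m) \<longrightarrow>
           prob_space.indep_var M (prob_algebra borel) P1 (prob_algebra borel) P2 \<longrightarrow>
           \<bar>(\<integral>\<omega>. kolmogorov_dist (P1 \<omega>) (P2 \<omega>) \<partial>M) - Z_stat K x y n m\<bar> < e"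
proof (intro allI impI)
  fix e :: real assume e: "e > 0"
  define k :: nat where "k = nat \<lceil>8 / e\<rceil> + 1"
  have k1: "k \<ge> 1" unfolding k_def by simp
  have kpos: "real k > 0" using k1 by simp
  have "real k \<ge> 8 / e" unfolding k_def by linarith
  then have kb: "2 / real k \<le> e / 4" using e kpos by (simp add: field_simps)
  define \<epsilon> where "\<epsilon> = min (1/4) (e / (32 * real k))"
  have ep: "0 < \<epsilon>" "\<epsilon> \<le> 1/4" unfolding \<epsilon>_def using e kpos by auto
  have epk: "4 * real k * \<epsilon> \<le> e / 8"
  proof -
    have "\<epsilon> \<le> e / (32 * real k)" unfolding \<epsilon>_def by simp
    then have "4 * real k * \<epsilon> \<le> 4 * real k * (e / (32 * real k))" using kpos by (intro mult_left_mono) auto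
    also have "\<dots> = e / 8" using kpos by simp
    finally show ?thesis .
  qed
  define N :: nat where "N = nat \<lceil>32 * real k / (\<epsilon>^2 * e) + 16 * K / e\<rceil> + 1"
  have Nb: "real N > 32 * real k / (\<epsilon>^2 * e) + 16 * K / e" unfolding N_def by linarith
  have Npos: "32 * real k / (\<epsilon>^2 * e) > 0" "16 * K / e > 0" using kpos ep e K_pos by auto
  have sizeb: "K / (K + real n) \<le> e / 16 \<and> real k * (2 * (1 / (\<epsilon>^2 * (K + real n)) + 2 * \<epsilon>)) \<le> 3 * e / 16"
    if "N \<le> n" for n
  proof
    have nN: "real n \<ge> real N" using that by simp
    have "16 * K / e < real n" using Nb Npos nN by linarith
    then have "16 * K < e * real n" using e by (simp add: field_simps)
    moreover have "e * K \<ge> 0" using e K_pos by simp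
    ultimately have "16 * K \<le> e * (K + real n)" by (simp add: distrib_left)
    then show "K / (K + real n) \<le> e / 16" using K_pos by (simp add: field_simps)
    have "32 * real k / (\<epsilon>^2 * e) < K + real n" using Nb Npos nN K_pos by linarith
    then have "32 * real k < (K + real n) * (\<epsilon>^2 * e)" using ep e by (simp add: field_simps)
    moreover have X: "\<epsilon>^2 * (K + real n) > 0" using ep K_pos by simp
    ultimately have "2 * real k \<le> e / 16 * (\<epsilon>^2 * (K + real n))" by (simp add: algebra_simps)
    then have "2 * real k / (\<epsilon>^2 * (K + real n)) \<le> e / 16"
      using X by (simp add: pos_divide_le_eq)
    moreover have "real k * (2 * (1 / (\<epsilon>^2 * (K + real n)) + 2 * \<epsilon>)) =
        2 * real k / (\<epsilon>^2 * (K + real n)) + 4 * real k * \<epsilon>" by (simp add: field_simps)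
    ultimately show "real k * (2 * (1 / (\<epsilon>^2 * (K + real n)) + 2 * \<epsilon>)) \<le> 3 * e / 16"
      using epk by simp
  qed
  show "\<exists>N. \<forall>n\<ge>N. \<forall>m\<ge>N. \<forall>(M :: 'a measure) P1 P2.
           prob_space M \<longrightarrow>
           dirichlet_process M P1 (K + real n) (post_base K G x n) \<longrightarrow>
           dirichlet_process M P2 (K + real m) (post_base K G y m) \<longrightarrow>
           prob_space.indep_var M (prob_algebra borel) P1 (prob_algebra borel) P2 \<longrightarrow>
           \<bar>(\<integral>\<omega>. kolmogorov_dist (P1 \<omega>) (P2 \<omega>) \<partial>M) - Z_stat K x y n m\<bar> < e"
  proof (intro exI[of _ N] allI impI)
    fix n m :: nat and M :: "'a measure" and P1 P2 :: "'a \<Rightarrow> real measure"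
    assume n: "N \<le> n" and m: "N \<le> m" and Mp: "prob_space M"
      and D1: "dirichlet_process M P1 (K + real n) (post_base K G x n)"
      and D2: "dirichlet_process M P2 (K + real m) (post_base K G y m)"
      and "prob_space.indep_var M (prob_algebra borel) P1 (prob_algebra borel) P2"
    interpret M: prob_space M by (rule Mp)
    have P1m: "P1 \<in> M \<rightarrow>\<^sub>M prob_algebra borel" using D1 unfolding dirichlet_process_def by blast
    have P2m: "P2 \<in> M \<rightarrow>\<^sub>M prob_algebra borel" using D2 unfolding dirichlet_process_def by blast
    have P1s: "prob_space (P1 \<omega>) \<and> sets (P1 \<omega>) = sets borel" if "\<omega> \<in> space M" for \<omega>
      using measurable_space[OF P1m that] by (simp add: space_prob_algebra)
    have P2s: "prob_space (P2 \<omega>) \<and> sets (P2 \<omega>) = sets borel" if "\<omega> \<in> space M" for \<omega>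
      using measurable_space[OF P2m that] by (simp add: space_prob_algebra)
    obtain T1 where T1: "finite T1" "card T1 \<le> k" and T1P: "\<forall>\<mu>. prob_space \<mu> \<longrightarrow> sets \<mu> = sets borel \<longrightarrow>
      (\<forall>t. \<bar>measure \<mu> {..t} - post_base K G x n {..t}\<bar> \<le> 1 / k +
      (\<Sum>s\<in>T1. \<bar>measure \<mu> {..s} - post_base K G x n {..s}\<bar> + \<bar>measure \<mu> {..<s} - post_base K G x n {..<s}\<bar>))"
      using post_base_bracket[OF K_pos G_prob G_sets k1, where x=x and n=n] by blast
    obtain T2 where T2: "finite T2" "card T2 \<le> k" and T2P: "\<forall>\<mu>. prob_space \<mu> \<longrightarrow> sets \<mu> = sets borel \<longrightarrow>
      (\<forall>t. \<bar>measure \<mu> {..t} - post_base K G y m {..t}\<bar> \<le> 1 / k +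
      (\<Sum>s\<in>T2. \<bar>measure \<mu> {..s} - post_base K G y m {..s}\<bar> + \<bar>measure \<mu> {..<s} - post_base K G y m {..<s}\<bar>))"
      using post_base_bracket[OF K_pos G_prob G_sets k1, where x=y and n=m] by blast
    define S1 where "S1 \<omega> = (\<Sum>s\<in>T1. \<bar>measure (P1 \<omega>) {..s} - post_base K G x n {..s}\<bar> + \<bar>measure (P1 \<omega>) {..<s} - post_base K G x n {..<s}\<bar>)" for \<omega>
    define S2 where "S2 \<omega> = (\<Sum>s\<in>T2. \<bar>measure (P2 \<omega>) {..s} - post_base K G y m {..s}\<bar> + \<bar>measure (P2 \<omega>) {..<s} - post_base K G y m {..<s}\<bar>)" for \<omega>
    define c0 where "c0 = 2 / real k + K / (K + real n) + K / (K + real m)"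
    define D where "D \<omega> = kolmogorov_dist (P1 \<omega>) (P2 \<omega>)" for \<omega>
    define Z where "Z = Z_stat K x y n m"
    define \<delta>1 where "\<delta>1 = 1 / (\<epsilon>^2 * (K + real n)) + 2 * \<epsilon>"
    define \<delta>2 where "\<delta>2 = 1 / (\<epsilon>^2 * (K + real m)) + 2 * \<epsilon>"
    have Kn: "K + real n > 0" "K + real m > 0" using K_pos by auto
    have B1: "integrable M (\<lambda>\<omega>. \<bar>measure (P1 \<omega>) A - post_base K G x n A\<bar>) \<and>
        (\<integral>\<omega>. \<bar>measure (P1 \<omega>) A - post_base K G x n A\<bar> \<partial>M) \<le> \<delta>1" if "A \<in> sets borel" for A
      unfolding \<delta>1_def
      by (rule dp_set_bound[OF Mp D1 Kn(1) that post_base_compl[OF K_pos G_prob G_sets that] ep])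
    have B2: "integrable M (\<lambda>\<omega>. \<bar>measure (P2 \<omega>) A - post_base K G y m A\<bar>) \<and>
        (\<integral>\<omega>. \<bar>measure (P2 \<omega>) A - post_base K G y m A\<bar> \<partial>M) \<le> \<delta>2" if "A \<in> sets borel" for A
      unfolding \<delta>2_def
      by (rule dp_set_bound[OF Mp D2 Kn(2) that post_base_compl[OF K_pos G_prob G_sets that] ep])
    have B1i: "integrable M (\<lambda>\<omega>. \<bar>measure (P1 \<omega>) A - post_base K G x n A\<bar>)" if "A \<in> sets borel" for A
      using B1[OF that] by blast
    have B1e: "(\<integral>\<omega>. \<bar>measure (P1 \<omega>) A - post_base K G x n A\<bar> \<partial>M) \<le> \<delta>1" if "A \<in> sets borel" for A
      using B1[OF that] by blast
    have S1i: "integrable M S1" unfolding S1_def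
      apply (rule Bochner_Integration.integrable_sum)
      apply (rule Bochner_Integration.integrable_add)
       apply (rule B1i, simp)+
      done
    have B2i: "integrable M (\<lambda>\<omega>. \<bar>measure (P2 \<omega>) A - post_base K G y m A\<bar>)" if "A \<in> sets borel" for A
      using B2[OF that] by blast
    have B2e: "(\<integral>\<omega>. \<bar>measure (P2 \<omega>) A - post_base K G y m A\<bar> \<partial>M) \<le> \<delta>2" if "A \<in> sets borel" for A
      using B2[OF that] by blast
    have S2i: "integrable M S2" unfolding S2_def
      apply (rule Bochner_Integration.integrable_sum)
      apply (rule Bochner_Integration.integrable_add)
       apply (rule B2i, simp)+
      done
    have S1b: "integral\<^sup>L M S1 \<le> real k * (2 * \<delta>1)"
    proof -
      have "integral\<^sup>L M S1 = (\<Sum>s\<in>T1. (\<integral>\<omega>. \<bar>measure (P1 \<omega>) {..s} - post_base K G x n {..s}\<bar> \<partial>M) +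
                 (\<integral>\<omega>. \<bar>measure (P1 \<omega>) {..<s} - post_base K G x n {..<s}\<bar> \<partial>M))"
        unfolding S1_def by (subst Bochner_Integration.integral_sum) (auto intro!: sum.cong Bochner_Integration.integral_add B1i)
      also have "\<dots> \<le> (\<Sum>s\<in>T1. \<delta>1 + \<delta>1)" by (intro sum_mono add_mono B1e) auto
      also have "\<dots> = real (card T1) * (2 * \<delta>1)" by simp
      also have "\<dots> \<le> real k * (2 * \<delta>1)"
        using T1 ep Kn unfolding \<delta>1_def by (intro mult_right_mono) auto
      finally show ?thesis .
    qed
    have S2b: "integral\<^sup>L M S2 \<le> real k * (2 * \<delta>2)"
    proof -
      have "integral\<^sup>L M S2 = (\<Sum>s\<in>T2. (\<integral>\<omega>. \<bar>measure (P2 \<omega>) {..s} - post_base K G y m {..s}\<bar> \<partial>M) +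
                 (\<integral>\<omega>. \<bar>measure (P2 \<omega>) {..<s} - post_base K G y m {..<s}\<bar> \<partial>M))"
        unfolding S2_def by (subst Bochner_Integration.integral_sum) (auto intro!: sum.cong Bochner_Integration.integral_add B2i)
      also have "\<dots> \<le> (\<Sum>s\<in>T2. \<delta>2 + \<delta>2)" by (intro sum_mono add_mono B2e) auto
      also have "\<dots> = real (card T2) * (2 * \<delta>2)" by simp
      also have "\<dots> \<le> real k * (2 * \<delta>2)"
        using T2 ep Kn unfolding \<delta>2_def by (intro mult_right_mono) auto
      finally show ?thesis .
    qed
    have ad01: "\<bar>a - b\<bar> \<le> 1" if "0 \<le> a" "a \<le> 1" "0 \<le> b" "b \<le> 1" for a b :: real
      using that by (simp add: abs_le_iff)
    have mb: "0 \<le> measure (P \<omega>) A \<and> measure (P \<omega>) A \<le> 1" if "prob_space (P \<omega>)" for P :: "'a \<Rightarrow> real measure" and \<omega> A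
      using prob_space.prob_le_1[OF that] by simp
    have Dm: "D \<in> borel_measurable M"
    proof -
      have eq: "D \<omega> = (SUP q\<in>\<rat>. \<bar>measure (P1 \<omega>) {..q} - measure (P2 \<omega>) {..q}\<bar>)" if "\<omega> \<in> space M" for \<omega>
        unfolding D_def using P1s[OF that] P2s[OF that] by (intro kd_rat) auto
      have "(\<lambda>\<omega>. SUP q\<in>\<rat>. \<bar>measure (P1 \<omega>) {..q} - measure (P2 \<omega>) {..q}\<bar>) \<in> borel_measurable M"
      proof (rule borel_measurable_cSUP)
        show "countable \<rat>" by (rule countable_rat)
        fix q :: real
        have a: "(\<lambda>\<omega>. measure (P1 \<omega>) {..q}) \<in> borel_measurable M"
          by (rule measurable_compose[OF P1m measurable_measure_prob_algebra]) simp
        have b: "(\<lambda>\<omega>. measure (P2 \<omega>) {..q}) \<in> borel_measurable M"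
          by (rule measurable_compose[OF P2m measurable_measure_prob_algebra]) simp
        show "(\<lambda>\<omega>. \<bar>measure (P1 \<omega>) {..q} - measure (P2 \<omega>) {..q}\<bar>) \<in> borel_measurable M"
          by (intro borel_measurable_abs borel_measurable_diff a b)
      next
        fix \<omega> assume w: "\<omega> \<in> space M"
        show "bdd_above ((\<lambda>q. \<bar>measure (P1 \<omega>) {..q} - measure (P2 \<omega>) {..q}\<bar>) ` \<rat>)"
          using mb[of P1 \<omega>] mb[of P2 \<omega>] P1s[OF w] P2s[OF w]
          by (intro bdd_aboveI[of _ 1]) (auto intro!: ad01)
      qed
      then show ?thesis by (rule measurable_cong[THEN iffD2, OF eq, rotated])
    qed
    have Dbd: "\<bar>D \<omega>\<bar> \<le> 1" if w: "\<omega> \<in> space M" for \<omega>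
    proof -
      have "\<bar>(SUP t. \<bar>measure (P1 \<omega>) {..t} - measure (P2 \<omega>) {..t}\<bar>) - (SUP t::real. 0::real)\<bar> \<le> 1"
        using mb[of P1 \<omega>] mb[of P2 \<omega>] P1s[OF w] P2s[OF w]
        by (intro sup_close[where B=1]) (auto intro!: ad01)
      then show ?thesis unfolding D_def kolmogorov_dist_def by simp
    qed
    have Di: "integrable M D"
      by (rule M.integrable_const_bound[where B=1]) (use Dbd Dm in \<open>auto intro!: AE_I2\<close>)
    have eb: "0 \<le> (\<Sum>i<nn. indicator {..t} (xx i)) / (K + real nn) \<and>
              (\<Sum>i<nn. indicator {..t} (xx i)) / (K + real nn) \<le> 1" for nn :: nat and xx :: "nat \<Rightarrow> real" and t :: real
    proof -
      have "0 \<le> (\<Sum>i<nn. indicator {..t} (xx i) :: real)" by (intro sum_nonneg) auto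
      moreover have "(\<Sum>i<nn. indicator {..t} (xx i) :: real) \<le> (\<Sum>i<nn. 1)" by (intro sum_mono) (auto simp: indicator_def)
      ultimately show ?thesis using K_pos by (auto simp: divide_le_eq_1)
    qed
    have gb: "\<bar>post_base K G xx nn {..t} - (\<Sum>i<nn. indicator {..t} (xx i)) / (K + real nn)\<bar> \<le> K / (K + real nn)"
      for nn :: nat and xx :: "nat \<Rightarrow> real" and t :: real
    proof -
      have "post_base K G xx nn {..t} - (\<Sum>i<nn. indicator {..t} (xx i)) / (K + real nn) = K * measure G {..t} / (K + real nn)"
        unfolding post_base_sum by (simp add: add_divide_distrib)
      moreover have "0 \<le> measure G {..t}" "measure G {..t} \<le> 1" using prob_space.prob_le_1[OF G_prob] by auto
      moreover have "K + real nn > 0" using K_pos by simp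
      ultimately show ?thesis using K_pos by (simp add: abs_mult divide_right_mono mult_left_le)
    qed
    have pw: "\<bar>D \<omega> - Z\<bar> \<le> c0 + S1 \<omega> + S2 \<omega>" if w: "\<omega> \<in> space M" for \<omega>
    proof -
      have f1: "\<bar>measure (P1 \<omega>) {..t} - post_base K G x n {..t}\<bar> \<le> 1 / k + S1 \<omega>" for t
        using T1P P1s[OF w] unfolding S1_def by blast
      have f2: "\<bar>measure (P2 \<omega>) {..t} - post_base K G y m {..t}\<bar> \<le> 1 / k + S2 \<omega>" for t
        using T2P P2s[OF w] unfolding S2_def by blast
      have "\<bar>(SUP t. \<bar>measure (P1 \<omega>) {..t} - measure (P2 \<omega>) {..t}\<bar>) -
             (SUP t. \<bar>(\<Sum>i<n. indicator {..t} (x i)) / (K + real n) - (\<Sum>j<m. indicator {..t} (y j)) / (K + real m)\<bar>)\<bar>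
            \<le> c0 + S1 \<omega> + S2 \<omega>"
      proof (rule sup_close[where B=1])
        fix t
        have "\<bar>measure (P1 \<omega>) {..t} - (\<Sum>i<n. indicator {..t} (x i)) / (K + real n)\<bar> \<le> 1 / k + S1 \<omega> + K / (K + real n)"
          using f1[of t] gb[of x n t] by linarith
        moreover have "\<bar>measure (P2 \<omega>) {..t} - (\<Sum>j<m. indicator {..t} (y j)) / (K + real m)\<bar> \<le> 1 / k + S2 \<omega> + K / (K + real m)"
          using f2[of t] gb[of y m t] by linarith
        ultimately show "\<bar>\<bar>measure (P1 \<omega>) {..t} - measure (P2 \<omega>) {..t}\<bar> -
              \<bar>(\<Sum>i<n. indicator {..t} (x i)) / (K + real n) - (\<Sum>j<m. indicator {..t} (y j)) / (K + real m)\<bar>\<bar>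
            \<le> c0 + S1 \<omega> + S2 \<omega>" unfolding c0_def by (simp add: abs_le_iff) linarith
        show "\<bar>\<bar>measure (P1 \<omega>) {..t} - measure (P2 \<omega>) {..t}\<bar>\<bar> \<le> 1"
          using mb[of P1 \<omega>] mb[of P2 \<omega>] P1s[OF w] P2s[OF w] by (auto intro!: ad01)
        show "\<bar>\<bar>(\<Sum>i<n. indicator {..t} (x i)) / (K + real n) - (\<Sum>j<m. indicator {..t} (y j)) / (K + real m)\<bar>\<bar> \<le> 1"
          using eb[of t x n] eb[of t y m] by (auto intro!: ad01)
      qed
      then show ?thesis unfolding D_def Z_def kolmogorov_dist_def Z_stat_def .
    qed
    have "\<bar>integral\<^sup>L M D - Z\<bar> = \<bar>\<integral>\<omega>. (D \<omega> - Z) \<partial>M\<bar>"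
      using Di M.prob_space by (simp add: Bochner_Integration.integral_diff)
    also have "\<dots> \<le> \<integral>\<omega>. (c0 + S1 \<omega> + S2 \<omega>) \<partial>M"
    proof -
      have fi: "integrable M (\<lambda>\<omega>. D \<omega> - Z)" using Di by (intro Bochner_Integration.integrable_diff M.integrable_const)
      have gi: "integrable M (\<lambda>\<omega>. c0 + S1 \<omega> + S2 \<omega>)" using S1i S2i
        by (intro Bochner_Integration.integrable_add M.integrable_const)
      have fi': "integrable M (\<lambda>\<omega>. - (D \<omega> - Z))" using fi by (rule Bochner_Integration.integrable_minus)
      have pw1: "D \<omega> - Z \<le> c0 + S1 \<omega> + S2 \<omega>" and pw2: "- (D \<omega> - Z) \<le> c0 + S1 \<omega> + S2 \<omega>"
        if "\<omega> \<in> space M" for \<omega> using pw[OF that] by (simp_all add: abs_le_iff)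
      have "(\<integral>\<omega>. (D \<omega> - Z) \<partial>M) \<le> (\<integral>\<omega>. (c0 + S1 \<omega> + S2 \<omega>) \<partial>M)"
        by (rule integral_mono[OF fi gi pw1])
      moreover have "(\<integral>\<omega>. - (D \<omega> - Z) \<partial>M) \<le> (\<integral>\<omega>. (c0 + S1 \<omega> + S2 \<omega>) \<partial>M)"
        by (rule integral_mono[OF fi' gi pw2])
      moreover have "(\<integral>\<omega>. - (D \<omega> - Z) \<partial>M) = - (\<integral>\<omega>. (D \<omega> - Z) \<partial>M)"
        by (rule Bochner_Integration.integral_minus)
      ultimately show ?thesis by (simp only: abs_le_iff)
    qed
    also have "\<dots> = c0 + integral\<^sup>L M S1 + integral\<^sup>L M S2"
      using S1i S2i M.prob_space by (simp add: Bochner_Integration.integral_add)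
    also have "\<dots> \<le> c0 + real k * (2 * \<delta>1) + real k * (2 * \<delta>2)" using S1b S2b by simp
    also have "\<dots> < e"
      using sizeb[OF n] sizeb[OF m] kb e unfolding c0_def \<delta>1_def \<delta>2_def by linarith
    finally show "\<bar>(\<integral>\<omega>. kolmogorov_dist (P1 \<omega>) (P2 \<omega>) \<partial>M) - Z_stat K x y n m\<bar> < e"
      unfolding D_def Z_def .
  qed
qed

end
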